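(* Assume $\mathcal G$ is strongly connected. Then there exists a constant $c\in(0,1)$ such that if for each agent $i$ the triggering times are generated recursively along the solution of system (S) by $t^i_1=0$ and either $$t^i_{k+1}=\max\Big\{\tau\ge t^i_k:\ |q_i(t^i_k)-q_i(t)|\le c\,|q_i(t)|\ \ \forall t\in[t^i_k,\tau]\Big\}$$ or $$t^i_{k+1}=\max\Big\{\tau\ge t^i_k:\ \frac{|q_i(t^i_k)|}{1+c}\le|q_i(t)|\le\frac{|q_i(t^i_k)|}{1-c}\ \ \forall t\in[t^i_k,\tau]\Big\},$$ then system (S) reaches consensus.
   Context: Let $\mathcal G$ be a weighted directed graph on agents $v_1,\dots,v_m$ with weighted adjacency matrix $\mathcal A=(a_{ij})$, $a_{ij}\ge0$, $a_{ii}=0$, where $a_{ij}>0$ iff there is a link from $v_j$ to $v_i$. Let $D=\mathrm{diag}(\sum_j a_{1j},\dots,\sum_j a_{mj})$ and $L=D-\mathcal A$. $\mathcal G$ is strongly connected if there is a directed path between any two distinct agents. System (S): $\dot x_i(t)=-\sum_{j=1}^m L_{ij}x_j(t^i_{k_i(t)})$, $i=1,\dots,m$, where $0=t^i_1<t^i_2<\cdots$ are agent $i$'s triggering times and $k_i(t)=\max\{k:t^i_k\le t\}$. Define $q_i(t)=-\sum_jL_{ij}x_j(t)$. Consensus means $x_i(t)-x_j(t)\to0$ as $t\to\infty$ for all $i,j$. *)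

theory Defs
  imports Complex_Main
begin

text \<open>Agents are the elements of a finite type 'n. The weighted adjacency matrix is
  a :: 'n \<Rightarrow> 'n \<Rightarrow> real, with a i j > 0 iff there is a link from agent j to agent i.\<close>

definition weighted_adjacency :: "('n::finite \<Rightarrow> 'n \<Rightarrow> real) \<Rightarrow> bool" where
  "weighted_adjacency a \<longleftrightarrow> (\<forall>i j. a i j \<ge> 0) \<and> (\<forall>i. a i i = 0)"

definition laplacian :: "('n::finite \<Rightarrow> 'n \<Rightarrow> real) \<Rightarrow> 'n \<Rightarrow> 'n \<Rightarrow> real" where
  "laplacian a i j = (if i = j then (\<Sum>k\<in>UNIV. a i k) else 0) - a i j"

definition graph_edges :: "('n \<Rightarrow> 'n \<Rightarrow> real) \<Rightarrow> ('n \<times> 'n) set" where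
  "graph_edges a = {(j, i). a i j > 0}"

definition strongly_connected :: "('n \<Rightarrow> 'n \<Rightarrow> real) \<Rightarrow> bool" where
  "strongly_connected a \<longleftrightarrow> (\<forall>i j. i \<noteq> j \<longrightarrow> (i, j) \<in> (graph_edges a)\<^sup>+)"

definition qfun :: "('n::finite \<Rightarrow> 'n \<Rightarrow> real) \<Rightarrow> (real \<Rightarrow> 'n \<Rightarrow> real) \<Rightarrow> 'n \<Rightarrow> real \<Rightarrow> real" where
  "qfun a x i t = - (\<Sum>j\<in>UNIV. laplacian a i j * x t j)"

text \<open>The set of triggering times of one agent: contains t_1 = 0, lies in [0,\<infinity>),
  and has only finitely many elements below any bound (so that k_i(t) is defined for
  every t \<ge> 0; the sequence may be finite or infinite).\<close>
definition admissible_triggers :: "real set \<Rightarrow> bool" where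
  "admissible_triggers T \<longleftrightarrow> 0 \<in> T \<and> T \<subseteq> {0..} \<and> (\<forall>b. finite (T \<inter> {..b}))"

definition last_trigger :: "real set \<Rightarrow> real \<Rightarrow> real" where
  "last_trigger T t = Max {s \<in> T. s \<le> t}"

definition solves_S ::
  "('n::finite \<Rightarrow> 'n \<Rightarrow> real) \<Rightarrow> ('n \<Rightarrow> real set) \<Rightarrow> (real \<Rightarrow> 'n \<Rightarrow> real) \<Rightarrow> bool" where
  "solves_S a T x \<longleftrightarrow>
     (\<forall>i. continuous_on {0..} (\<lambda>t. x t i) \<and>
          (\<forall>t>0. t \<notin> T i \<longrightarrow>
             ((\<lambda>s. x s i) has_real_derivative
                (- (\<Sum>j\<in>UNIV. laplacian a i j * x (last_trigger (T i) t) j))) (at t)))"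

text \<open>The triggering set T is generated recursively by the rule P (P s t: the condition
  at time t relative to the last trigger s): for each trigger s, with
  S = {\<tau> \<ge> s. P s t for all t \<in> [s,\<tau>]}, the next trigger (if any) is the maximum of S,
  and if there is no next trigger, S is unbounded (max S = \<infinity>).\<close>
definition generated_by :: "real set \<Rightarrow> (real \<Rightarrow> real \<Rightarrow> bool) \<Rightarrow> bool" where
  "generated_by T P \<longleftrightarrow>
     (\<forall>s\<in>T. let S = {\<tau>. s \<le> \<tau> \<and> (\<forall>t\<in>{s..\<tau>}. P s t)} in
        (\<exists>n\<in>T. s < n \<and> T \<inter> {s<..<n} = {} \<and> n \<in> S \<and> (\<forall>\<tau>\<in>S. \<tau> \<le> n))
        \<or> ((\<forall>n\<in>T. n \<le> s) \<and> (\<forall>\<tau>\<ge>s. \<tau> \<in> S)))"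

definition rule1 :: "real \<Rightarrow> (real \<Rightarrow> real) \<Rightarrow> real \<Rightarrow> real \<Rightarrow> bool" where
  "rule1 c qi s t \<longleftrightarrow> \<bar>qi s - qi t\<bar> \<le> c * \<bar>qi t\<bar>"

definition rule2 :: "real \<Rightarrow> (real \<Rightarrow> real) \<Rightarrow> real \<Rightarrow> real \<Rightarrow> bool" where
  "rule2 c qi s t \<longleftrightarrow> \<bar>qi s\<bar> / (1 + c) \<le> \<bar>qi t\<bar> \<and> \<bar>qi t\<bar> \<le> \<bar>qi s\<bar> / (1 - c)"

definition consensus :: "(real \<Rightarrow> 'n \<Rightarrow> real) \<Rightarrow> bool" where
  "consensus x \<longleftrightarrow> (\<forall>i j. ((\<lambda>t. x t i - x t j) \<longlongrightarrow> 0) at_top)"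

end

theory Submission
  imports Defs "HOL-Analysis.Analysis"
begin

lemma mono_exc:
  fixes f :: "real \<Rightarrow> real"
  assumes ab: "a \<le> b" and S: "finite S" and cf: "continuous_on {a..b} f"
    and d: "\<And>x. x \<in> {a<..<b} - S \<Longrightarrow> \<exists>y. (f has_real_derivative y) (at x) \<and> 0 \<le> y"
  shows "f a \<le> f b"
proof -
  define g where "g x = (if x \<in> {a<..<b} - S then (SOME y. (f has_real_derivative y) (at x) \<and> 0 \<le> y) else 0)" for x
  have g: "(f has_real_derivative g x) (at x) \<and> 0 \<le> g x" if "x \<in> {a<..<b} - S" for x
    using someI_ex[OF d[OF that]] that by (simp add: g_def)
  have g0: "0 \<le> g x" for x
    using g[of x] by (auto simp: g_def)
  have "(g has_integral (f b - f a)) {a..b}"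
    apply (rule fundamental_theorem_of_calculus_interior_strong[OF S ab _ cf])
    using g by (simp add: has_real_derivative_iff_has_vector_derivative)
  then have "0 \<le> f b - f a" by (rule has_integral_nonneg) (use g0 in auto)
  thus ?thesis by simp
qed

definition phi :: "real \<Rightarrow> real" where "phi w = max (3/2*w) (w/2)"

lemma qfun_eq:
  assumes "weighted_adjacency a"
  shows "qfun a x k t = (\<Sum>j\<in>UNIV. a k j * (x t j - x t k))"
proof -
  have akk: "a k k = 0" using assms by (simp add: weighted_adjacency_def)
  have "qfun a x k t = - (\<Sum>j\<in>UNIV. (if k = j then (\<Sum>m\<in>UNIV. a k m) else 0) * x t j - a k j * x t j)"
    by (simp add: qfun_def laplacian_def algebra_simps)
  also have "\<dots> = - ((\<Sum>m\<in>UNIV. a k m) * x t k - (\<Sum>j\<in>UNIV. a k j * x t j))"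
  proof -
    have "(\<Sum>j\<in>UNIV. (if k = j then (\<Sum>m\<in>UNIV. a k m) else 0) * x t j) = (\<Sum>j\<in>UNIV. if k = j then (\<Sum>m\<in>UNIV. a k m) * x t j else 0)"
      by (rule sum.cong) auto
    also have "\<dots> = (\<Sum>m\<in>UNIV. a k m) * x t k" by simp
    finally show ?thesis by (simp add: sum_subtractf)
  qed
  also have "\<dots> = (\<Sum>j\<in>UNIV. a k j * (x t j - x t k))"
  proof -
    have "(\<Sum>j\<in>UNIV. a k j * x t k) = (\<Sum>j\<in>UNIV. a k j) * x t k" by (simp add: sum_distrib_right)
    then show ?thesis by (simp add: right_diff_distrib sum_subtractf)
  qed
  finally show ?thesis .
qed

lemma trig:
  assumes adm: "admissible_triggers T" and gen: "generated_by T P" and t: "0 \<le> t"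
  shows "last_trigger T t \<in> T \<and> last_trigger T t \<le> t \<and> (\<forall>u\<in>{last_trigger T t..t}. P (last_trigger T t) u)"
proof -
  let ?A = "{s \<in> T. s \<le> t}"
  have eqA: "?A = T \<inter> {..t}" by auto
  have fin: "finite ?A" using adm unfolding admissible_triggers_def eqA by blast
  have ne: "?A \<noteq> {}" using adm t unfolding admissible_triggers_def by auto
  define s where "s = last_trigger T t"
  have sA: "s \<in> ?A" unfolding s_def last_trigger_def using Max_in[OF fin ne] .
  have mx: "n \<le> s" if "n \<in> T" "n \<le> t" for n
    unfolding s_def last_trigger_def using Max_ge[OF fin] that by auto
  have "\<forall>u\<in>{s..t}. P s u"
  proof -
    from gen sA have "(\<exists>n\<in>T. s < n \<and> T \<inter> {s<..<n} = {} \<and> n \<in> {\<tau>. s \<le> \<tau> \<and> (\<forall>t\<in>{s..\<tau>}. P s t)})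
        \<or> ((\<forall>n\<in>T. n \<le> s) \<and> (\<forall>\<tau>\<ge>s. \<tau> \<in> {\<tau>. s \<le> \<tau> \<and> (\<forall>t\<in>{s..\<tau>}. P s t)}))"
      using bspec[OF gen[unfolded generated_by_def], of s] by (simp add: Let_def) meson
    then show ?thesis
    proof
      assume "\<exists>n\<in>T. s < n \<and> T \<inter> {s<..<n} = {} \<and> n \<in> {\<tau>. s \<le> \<tau> \<and> (\<forall>t\<in>{s..\<tau>}. P s t)}"
      then obtain n where n: "n \<in> T" "s < n" "\<forall>u\<in>{s..n}. P s u" by auto
      have "t < n" using mx[OF n(1)] n(2) by force
      with n(3) show ?thesis by auto
    next
      assume "(\<forall>n\<in>T. n \<le> s) \<and> (\<forall>\<tau>\<ge>s. \<tau> \<in> {\<tau>. s \<le> \<tau> \<and> (\<forall>t\<in>{s..\<tau>}. P s t)})"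
      then show ?thesis using sA by auto
    qed
  qed
  with sA show ?thesis unfolding s_def by auto
qed

lemma rule1_bound:
  assumes "rule1 (1/2) q s t"
  shows "q s \<le> phi (q t) \<and> - q s \<le> phi (- q t)"
  using assms unfolding rule1_def phi_def by (auto simp: abs_if split: if_splits)

lemma rule2_bound:
  assumes st: "s \<le> t" and cq: "continuous_on {s..t} q" and r: "\<forall>u\<in>{s..t}. rule2 (1/2) q s u"
  shows "q s \<le> phi (q t) \<and> - q s \<le> phi (- q t)"
proof -
  have r': "2/3 * \<bar>q s\<bar> \<le> \<bar>q u\<bar> \<and> \<bar>q u\<bar> \<le> 2 * \<bar>q s\<bar>" if "u \<in> {s..t}" for u
  proof -
    have "\<bar>q s\<bar> / (1 + 1/2) \<le> \<bar>q u\<bar> \<and> \<bar>q u\<bar> \<le> \<bar>q s\<bar> / (1 - 1/2)"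
      using r[rule_format, OF that] unfolding rule2_def by simp
    then show ?thesis by simp
  qed
  show ?thesis
  proof (cases "q s = 0")
    case True then show ?thesis using r'[of t] st by (simp add: phi_def)
  next
    case False
    show ?thesis
    proof (cases "q s > 0")
      case True
      have "q t > 0"
      proof (rule ccontr)
        assume "\<not> q t > 0"
        then obtain u where "u \<ge> s" "u \<le> t" "q u = 0"
          using IVT2'[of q t 0 s, OF _ _ st cq] True by force
        then show False using r'[of u] True by auto
      qed
      then show ?thesis using r'[of t] st True by (auto simp: phi_def)
    next
      case False
      then have neg: "q s < 0" using \<open>q s \<noteq> 0\<close> by auto
      have "q t < 0"
      proof (rule ccontr)
        assume "\<not> q t < 0"
        then obtain u where "u \<ge> s" "u \<le> t" "q u = 0"
          using IVT'[of q s 0 t, OF _ _ st cq] neg by force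
        then show False using r'[of u] neg by auto
      qed
      then show ?thesis using r'[of t] st neg by (auto simp: phi_def)
    qed
  qed
qed

lemma phi_mono: "u \<le> v \<Longrightarrow> phi u \<le> phi v" by (simp add: phi_def max.coboundedI1 max.coboundedI2 max_def)
lemma phi_nonneg: "0 \<le> v \<Longrightarrow> phi v = 3/2 * v" by (simp add: phi_def max_def)

locale sys =
  fixes a :: "'n::finite \<Rightarrow> 'n \<Rightarrow> real" and x :: "real \<Rightarrow> 'n \<Rightarrow> real" and E :: "'n \<Rightarrow> real set"
  assumes wa: "weighted_adjacency a"
    and cont: "\<And>i. continuous_on {0..} (\<lambda>t. x t i)"
    and lf: "\<And>i b. finite (E i \<inter> {..b})"
    and der: "\<And>i t. 0 < t \<Longrightarrow> t \<notin> E i \<Longrightarrow> \<exists>D. ((\<lambda>s. x s i) has_real_derivative D) (at t)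
                \<and> D \<le> phi (qfun a x i t) \<and> - D \<le> phi (- qfun a x i t)"
begin

lemma a_nonneg: "0 \<le> a i j" using wa by (simp add: weighted_adjacency_def)

lemma upper_eps:
  assumes t0: "0 \<le> t0" and M: "\<And>j. x t0 j \<le> M" and e: "0 < \<epsilon>"
  shows "\<forall>t i. t0 \<le> t \<longrightarrow> x t i < M + \<epsilon> * (1 + t - t0)"
proof (rule ccontr)
  assume "\<not> ?thesis"
  then obtain t1 i1 where t1: "t0 \<le> t1" "x t1 i1 \<ge> M + \<epsilon> * (1 + t1 - t0)" by (meson not_less)
  define w where "w i t = x t i - M - \<epsilon> * (1 + t - t0)" for i t
  have cw: "continuous_on {t0..t1} (w i)" for i
  proof -
    have "continuous_on {t0..t1} (\<lambda>t. x t i)" by (rule continuous_on_subset[OF cont]) (use t0 in auto)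
    then show ?thesis unfolding w_def by (intro continuous_intros)
  qed
  define Z where "Z = (\<Union>i. {t0..t1} \<inter> w i -` {0..})"
  have clZ: "closed Z" unfolding Z_def
    by (intro closed_UN finite_UNIV ballI continuous_closed_preimage cw closed_atLeastAtMost closed_atLeast) simp
  have t1Z: "t1 \<in> Z" unfolding Z_def w_def using t1 by (auto intro!: exI[of _ i1])
  have bdd: "bdd_below Z" unfolding Z_def by (rule bdd_belowI[of _ t0]) auto
  define \<tau> where "\<tau> = Inf Z"
  have \<tau>Z: "\<tau> \<in> Z" unfolding \<tau>_def using closed_contains_Inf[OF _ bdd clZ] t1Z by blast
  then obtain k where k: "w k \<tau> \<ge> 0" "t0 \<le> \<tau>" "\<tau> \<le> t1" unfolding Z_def by auto
  have below: "w j u < 0" if "t0 \<le> u" "u < \<tau>" for u j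
  proof (rule ccontr)
    assume "\<not> w j u < 0"
    then have "u \<in> Z" unfolding Z_def using that k by (auto intro!: exI[of _ j])
    then have "\<tau> \<le> u" unfolding \<tau>_def by (rule cInf_lower[OF _ bdd])
    then show False using that by simp
  qed
  have "w k t0 < 0" unfolding w_def using M[of k] e by simp
  then have t0\<tau>: "t0 < \<tau>" using k by (cases "t0 = \<tau>") auto
  define deg where "deg = (\<Sum>j\<in>UNIV. a k j)"
  have deg0: "0 \<le> deg" unfolding deg_def by (simp add: a_nonneg sum_nonneg)
  define \<eta> where "\<eta> = \<epsilon> / (3 * deg + 3)"
  have \<eta>0: "0 < \<eta>" unfolding \<eta>_def using e deg0 by simp
  have \<eta>b: "3/2 * (deg * \<eta>) \<le> \<epsilon> / 2"
  proof -
    have "deg * \<eta> = \<epsilon> * (deg / (3 * deg + 3))" unfolding \<eta>_def by simp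
    also have "\<dots> \<le> \<epsilon> * (1/3)" using e deg0 by (intro mult_left_mono) (auto simp: field_simps)
    finally show ?thesis by (simp add: mult.commute)
  qed
  have "\<tau> \<in> {0..}" using t0 k by auto
  from cont[of k, unfolded continuous_on_iff, rule_format, OF this \<eta>0]
  obtain \<delta> where \<delta>: "\<delta> > 0" "\<And>u. u \<in> {0..} \<Longrightarrow> dist u \<tau> < \<delta> \<Longrightarrow> dist (x u k) (x \<tau> k) < \<eta>" by blast
  define s where "s = max t0 (\<tau> - \<delta>/2)"
  have s: "t0 \<le> s" "s < \<tau>" "\<tau> - \<delta> < s" unfolding s_def using t0\<tau> \<delta>(1) by auto
  have "(\<lambda>u. - w k u) s \<le> (\<lambda>u. - w k u) \<tau>"
  proof (rule mono_exc[where S = "E k \<inter> {..\<tau>}" and f = "\<lambda>u. - w k u"])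
    show "s \<le> \<tau>" using s by simp
    show "finite (E k \<inter> {..\<tau>})" by (rule lf)
    show "continuous_on {s..\<tau>} (\<lambda>u. - w k u)"
      by (intro continuous_intros continuous_on_subset[OF cw]) (use s k in auto)
  next
    fix u assume u: "u \<in> {s<..<\<tau>} - (E k \<inter> {..\<tau>})"
    then have u0: "0 < u" and uE: "u \<notin> E k" and us: "s < u" "u < \<tau>" using s t0 by auto
    obtain D where D: "((\<lambda>s. x s k) has_real_derivative D) (at u)" "D \<le> phi (qfun a x k u)"
      using der[OF u0 uE] by blast
    have xk: "x u k > x \<tau> k - \<eta>"
      using \<delta>(2)[of u] us s u0 by (auto simp: dist_real_def)
    have diff: "x u j - x u k \<le> \<eta>" for j
    proof -
      have "x u j < M + \<epsilon> * (1 + u - t0)" using below[of u j] us s unfolding w_def by auto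
      moreover have "x \<tau> k \<ge> M + \<epsilon> * (1 + \<tau> - t0)" using k unfolding w_def by auto
      moreover have "\<epsilon> * (1 + u - t0) \<le> \<epsilon> * (1 + \<tau> - t0)" using e us by (intro mult_left_mono) auto
      ultimately show ?thesis using xk by linarith
    qed
    have "qfun a x k u \<le> (\<Sum>j\<in>UNIV. a k j * \<eta>)"
      unfolding qfun_eq[OF wa] by (intro sum_mono mult_left_mono diff a_nonneg)
    also have "\<dots> = deg * \<eta>" unfolding deg_def by (simp add: sum_distrib_right)
    finally have "phi (qfun a x k u) \<le> 3/2 * (deg * \<eta>)"
      using phi_mono phi_nonneg[of "deg * \<eta>"] deg0 \<eta>0 by fastforce
    then have Dle: "D \<le> \<epsilon>/2" using D(2) \<eta>b by linarith
    have "((\<lambda>u. - w k u) has_real_derivative (- (D - \<epsilon>))) (at u)"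
      unfolding w_def using D(1) by (auto intro!: derivative_eq_intros)
    then show "\<exists>y. ((\<lambda>u. - w k u) has_real_derivative y) (at u) \<and> 0 \<le> y"
      using Dle e by (intro exI[of _ "- (D - \<epsilon>)"]) auto
  qed
  then show False using below[of s k] s k by simp
qed

lemma upper:
  assumes t0: "0 \<le> t0" "t0 \<le> t" and M: "\<And>j. x t0 j \<le> M"
  shows "x t i \<le> M"
proof (rule ccontr)
  assume "\<not> x t i \<le> M"
  define \<epsilon> where "\<epsilon> = (x t i - M) / (2 * (1 + t - t0))"
  have e: "0 < \<epsilon>" unfolding \<epsilon>_def using \<open>\<not> x t i \<le> M\<close> t0 by simp
  have lt: "x t i < M + \<epsilon> * (1 + t - t0)" using upper_eps[OF t0(1) M e] t0 by blast
  have pos: "0 < 1 + t - t0" using t0 by simp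
  have "\<epsilon> * (1 + t - t0) = (x t i - M) / 2" unfolding \<epsilon>_def using pos by (simp add: field_simps)
  then have "x t i < M + (x t i - M) / 2" using lt by linarith
  then show False using \<open>\<not> x t i \<le> M\<close> by (simp add: field_simps)
qed

end

lemma gron:
  fixes y :: "real \<Rightarrow> real"
  assumes tt: "t1 \<le> t" and S: "finite S" and cy: "continuous_on {t1..t} y" and K: "0 \<le> K" and g: "0 \<le> g0"
    and d: "\<And>u. u \<in> {t1<..<t} - S \<Longrightarrow> \<exists>D. (y has_real_derivative D) (at u) \<and> g0 - K * y u \<le> D"
  shows "exp (-K*(t-t1)) * (y t1 + g0*(t-t1)) \<le> y t"
proof -
  define h where "h u = exp (K*(u-t1)) * y u - g0*(u-t1)" for u
  have "h t1 \<le> h t"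
  proof (rule mono_exc[OF tt S])
    show "continuous_on {t1..t} h" unfolding h_def by (intro continuous_intros cy)
  next
    fix u assume u: "u \<in> {t1<..<t} - S"
    obtain D where D: "(y has_real_derivative D) (at u)" "g0 - K * y u \<le> D" using d[OF u] by blast
    have hd: "(h has_real_derivative (exp (K*(u-t1)) * K * y u + exp (K*(u-t1)) * D - g0)) (at u)"
      unfolding h_def using D(1) by (auto intro!: derivative_eq_intros simp: algebra_simps)
    have e1: "1 \<le> exp (K*(u-t1))" using u K by simp
    have "exp (K*(u-t1)) * K * y u + exp (K*(u-t1)) * D - g0 = exp (K*(u-t1)) * (K * y u + D) - g0"
      by (simp add: algebra_simps)
    also have "\<dots> \<ge> exp (K*(u-t1)) * g0 - g0" using D(2) by (intro diff_right_mono mult_left_mono) auto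
    finally have "0 \<le> exp (K*(u-t1)) * K * y u + exp (K*(u-t1)) * D - g0"
      using mult_right_mono[OF e1 g] by linarith
    with hd show "\<exists>y. (h has_real_derivative y) (at u) \<and> 0 \<le> y" by blast
  qed
  then have "y t1 + g0*(t-t1) \<le> exp (K*(t-t1)) * y t" unfolding h_def by simp
  then have "exp (-K*(t-t1)) * (y t1 + g0*(t-t1)) \<le> exp (-K*(t-t1)) * (exp (K*(t-t1)) * y t)"
    by (intro mult_left_mono) auto
  also have "\<dots> = y t" by (simp add: mult.assoc[symmetric] exp_add[symmetric])
  finally show ?thesis .
qed

definition Kc :: "('n::finite \<Rightarrow> 'n \<Rightarrow> real) \<Rightarrow> real" where
  "Kc a = 3/2 * (\<Sum>k\<in>UNIV. \<Sum>j\<in>UNIV. a k j)"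
definition amin :: "('n::finite \<Rightarrow> 'n \<Rightarrow> real) \<Rightarrow> real" where
  "amin a = min 1 (Min (range (\<lambda>p. if a (fst p) (snd p) > 0 then a (fst p) (snd p) else 1)))"

lemma amin_pos: "0 < amin a"
proof -
  let ?f = "\<lambda>p. if a (fst p) (snd p) > 0 then a (fst p) (snd p) else (1::real)"
  have "Min (range ?f) \<in> range ?f" by (rule Min_in) auto
  then have "0 < Min (range ?f)" by (auto split: if_splits)
  then show ?thesis unfolding amin_def by simp
qed
lemma amin_le1: "amin a \<le> 1" unfolding amin_def by simp
lemma amin_le: assumes "a k i > 0" shows "amin a \<le> a k i"
proof -
  let ?f = "\<lambda>p. if a (fst p) (snd p) > 0 then a (fst p) (snd p) else (1::real)"
  have "Min (range ?f) \<le> ?f (k,i)" by (rule Min_le) (simp, rule rangeI)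
  then show ?thesis unfolding amin_def using assms by simp
qed

context sys begin

lemma Kc_nonneg: "0 \<le> Kc a" unfolding Kc_def by (simp add: a_nonneg sum_nonneg)

lemma deg_le: "3/2 * (\<Sum>j\<in>UNIV. a k j) \<le> Kc a"
proof -
  have "(\<Sum>j\<in>UNIV. a k j) \<le> (\<Sum>k\<in>UNIV. \<Sum>j\<in>UNIV. a k j)"
    by (rule member_le_sum[of k UNIV "\<lambda>k. \<Sum>j\<in>UNIV. a k j"]) (auto simp: a_nonneg sum_nonneg)
  then show ?thesis unfolding Kc_def by simp
qed

lemma q_bound:
  assumes "\<And>j. x u j \<le> M"
  shows "qfun a x k u \<le> (\<Sum>j\<in>UNIV. a k j) * (M - x u k) - a k i * (M - x u i)"
proof -
  have "qfun a x k u = (\<Sum>j\<in>UNIV. a k j * (M - x u k) - a k j * (M - x u j))"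
    unfolding qfun_eq[OF wa] by (rule sum.cong) (auto simp: algebra_simps)
  also have eq: "\<dots> = (\<Sum>j\<in>UNIV. a k j) * (M - x u k) - (\<Sum>j\<in>UNIV. a k j * (M - x u j))"
    by (simp add: sum_subtractf sum_distrib_right)
  finally have eq: "qfun a x k u = (\<Sum>j\<in>UNIV. a k j) * (M - x u k) - (\<Sum>j\<in>UNIV. a k j * (M - x u j))" .
  have "(\<Sum>j\<in>UNIV. a k j * (M - x u j)) \<ge> a k i * (M - x u i)"
    by (rule member_le_sum[of i UNIV "\<lambda>j. a k j * (M - x u j)"]) (auto intro!: mult_nonneg_nonneg a_nonneg simp: assms)
  then show ?thesis using eq by linarith
qed

lemma deriv_y:
  assumes t0: "0 \<le> t0" and M: "\<And>j. x t0 j \<le> M" and u: "t0 < u" "u \<notin> E k"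
  shows "\<exists>D'. ((\<lambda>s. M - x s k) has_real_derivative D') (at u) \<and> 1/2 * a k i * (M - x u i) - Kc a * (M - x u k) \<le> D'"
proof -
  obtain D where D: "((\<lambda>s. x s k) has_real_derivative D) (at u)" "D \<le> phi (qfun a x k u)"
    using der[of u k] u t0 by auto
  have Mu: "x u j \<le> M" for j using upper[OF t0 _ M] u by simp
  define A where "A = (\<Sum>j\<in>UNIV. a k j) * (M - x u k)"
  define B where "B = a k i * (M - x u i)"
  have A0: "0 \<le> A" unfolding A_def using Mu[of k] by (simp add: a_nonneg sum_nonneg)
  have B0: "0 \<le> B" unfolding B_def using Mu[of i] by (simp add: a_nonneg)
  have "phi (qfun a x k u) \<le> phi (A - B)" unfolding A_def B_def by (rule phi_mono[OF q_bound[OF Mu]])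
  also have "\<dots> \<le> 3/2 * A - 1/2 * B" using A0 B0 by (simp add: phi_def)
  also have "3/2 * A \<le> Kc a * (M - x u k)" unfolding A_def using deg_le[of k] Mu[of k]
    by (metis mult.assoc mult_right_mono diff_ge_0_iff_ge)
  finally have "D \<le> Kc a * (M - x u k) - 1/2 * B" using D(2) by linarith
  then show ?thesis using D(1) unfolding B_def
    by (intro exI[of _ "-D"]) (auto intro!: derivative_eq_intros)
qed

end

context sys begin

lemma propagate:
  fixes N :: nat
  assumes t0: "0 \<le> t0" and M: "\<And>j. x t0 j \<le> M" and r: "x t0 r = m"
  shows "(r,k) \<in> (graph_edges a)^^l \<Longrightarrow> t0 + real l \<le> t \<Longrightarrow> t \<le> t0 + real N \<Longrightarrow>
     exp (- Kc a * N) * (exp (- Kc a * N) * amin a / 2)^l * (M - m) \<le> M - x t k"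
proof (induction l arbitrary: k t)
  case 0
  then have k: "k = r" and tt: "t0 \<le> t" "t \<le> t0 + N" by auto
  have mM: "m \<le> M" using M[of r] r by simp
  have g: "exp (-Kc a*(t-t0)) * ((M - x t0 r) + 0*(t-t0)) \<le> M - x t r"
  proof (rule gron[where S = "E r \<inter> {..t}" and y = "\<lambda>s. M - x s r"])
    show "t0 \<le> t" by fact
    show "finite (E r \<inter> {..t})" by (rule lf)
    show "continuous_on {t0..t} (\<lambda>s. M - x s r)"
      by (intro continuous_intros continuous_on_subset[OF cont]) (use t0 in auto)
    show "0 \<le> Kc a" by (rule Kc_nonneg)
    show "0 \<le> (0::real)" by simp
  next
    fix u assume u: "u \<in> {t0<..<t} - E r \<inter> {..t}"
    then have "t0 < u" "u \<notin> E r" by auto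
    from deriv_y[OF t0 M this, of r] have
      "\<exists>D'. ((\<lambda>s. M - x s r) has_real_derivative D') (at u) \<and> 1/2 * a r r * (M - x u r) - Kc a * (M - x u r) \<le> D'" .
    moreover have "a r r = 0" using wa by (simp add: weighted_adjacency_def)
    ultimately show "\<exists>D. ((\<lambda>s. M - x s r) has_real_derivative D) (at u) \<and> 0 - Kc a * (M - x u r) \<le> D" by simp
  qed
  have "exp (- Kc a * N) \<le> exp (-Kc a*(t-t0))" using tt Kc_nonneg by (simp add: mult_left_mono)
  then have "exp (- Kc a * N) * (M - m) \<le> exp (-Kc a*(t-t0)) * (M - m)"
    using mM by (intro mult_right_mono) auto
  then show ?case using g k r by simp
next
  case (Suc l)
  from Suc.prems(1) obtain i where ri: "(r,i) \<in> (graph_edges a)^^l" and ik: "(i,k) \<in> graph_edges a"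
    by (auto elim: relpow_Suc_E)
  have aki: "0 < a k i" using ik by (simp add: graph_edges_def)
  define c where "c = exp (- Kc a * N) * (exp (- Kc a * N) * amin a / 2)^l * (M - m)"
  have mM: "m \<le> M" using M[of r] r by simp
  have c0: "0 \<le> c" unfolding c_def using mM amin_pos[of a] by simp
  have IH: "c \<le> M - x u i" if "t0 + real l \<le> u" "u \<le> t0 + real N" for u
    unfolding c_def using Suc.IH[OF ri that] .
  define t1 where "t1 = t0 + real l"
  define g0 where "g0 = 1/2 * amin a * c"
  have g00: "0 \<le> g0" unfolding g0_def using c0 amin_pos[of a] by simp
  have tt: "t1 + 1 \<le> t" "t \<le> t0 + N" "t0 \<le> t1" using Suc.prems unfolding t1_def by auto
  have g: "exp (-Kc a*(t-t1)) * ((M - x t1 k) + g0*(t-t1)) \<le> M - x t k"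
  proof (rule gron[where S = "E k \<inter> {..t}" and y = "\<lambda>s. M - x s k"])
    show "t1 \<le> t" using tt by simp
    show "finite (E k \<inter> {..t})" by (rule lf)
    show "continuous_on {t1..t} (\<lambda>s. M - x s k)"
      by (intro continuous_intros continuous_on_subset[OF cont]) (use t0 tt in auto)
    show "0 \<le> Kc a" by (rule Kc_nonneg)
    show "0 \<le> g0" by fact
  next
    fix u assume u: "u \<in> {t1<..<t} - E k \<inter> {..t}"
    then have uu: "t0 < u" "u \<notin> E k" using tt by auto
    from deriv_y[OF t0 M uu, of i] obtain D' where D':
      "((\<lambda>s. M - x s k) has_real_derivative D') (at u)" "1/2 * a k i * (M - x u i) - Kc a * (M - x u k) \<le> D'"
      by blast
    have "amin a * c \<le> a k i * (M - x u i)"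
      using amin_le[of a k i, OF aki] IH[of u] u tt c0 amin_pos[of a] unfolding t1_def by (intro mult_mono) auto
    then have "g0 - Kc a * (M - x u k) \<le> D'" using D'(2) unfolding g0_def by linarith
    with D'(1) show "\<exists>D. ((\<lambda>s. M - x s k) has_real_derivative D) (at u) \<and> g0 - Kc a * (M - x u k) \<le> D" by blast
  qed
  have yk: "0 \<le> M - x t1 k" using upper[OF t0 tt(3) M, of k] by simp
  have "g0 \<le> (M - x t1 k) + g0*(t-t1)" using yk g00 tt mult_left_mono[of 1 "t - t1" g0] by simp
  moreover have "exp (- Kc a * N) \<le> exp (-Kc a*(t-t1))" using tt Kc_nonneg by (simp add: mult_left_mono)
  ultimately have "exp (- Kc a * N) * g0 \<le> exp (-Kc a*(t-t1)) * ((M - x t1 k) + g0*(t-t1))"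
    using g00 by (intro mult_mono) auto
  with g have "exp (- Kc a * N) * g0 \<le> M - x t k" by linarith
  moreover have "exp (- Kc a * N) * g0 = exp (- Kc a * N) * (exp (- Kc a * N) * amin a / 2)^(Suc l) * (M - m)"
    unfolding g0_def c_def by (simp add: algebra_simps)
  ultimately show ?case by linarith
qed

end

lemma qfun_neg: "qfun a (\<lambda>t i. - x t i) i t = - qfun a x i t"
  unfolding qfun_def by (simp add: sum_negf)

context sys begin

lemma neg: "sys a (\<lambda>t i. - x t i) E"
proof unfold_locales
  show "weighted_adjacency a" by (rule wa)
  show "continuous_on {0..} (\<lambda>t. - x t i)" for i by (intro continuous_intros cont)
  show "finite (E i \<inter> {..b})" for i b by (rule lf)
  fix i t assume "0 < t" "t \<notin> E i"
  from der[OF this] obtain D where D: "((\<lambda>s. x s i) has_real_derivative D) (at t)"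
    "D \<le> phi (qfun a x i t)" "- D \<le> phi (- qfun a x i t)" by blast
  show "\<exists>D. ((\<lambda>s. - x s i) has_real_derivative D) (at t) \<and>
           D \<le> phi (qfun a (\<lambda>t i. - x t i) i t) \<and> - D \<le> phi (- qfun a (\<lambda>t i. - x t i) i t)"
    using D by (intro exI[of _ "-D"]) (auto intro!: derivative_eq_intros simp: qfun_neg)
qed

lemma lower:
  assumes "0 \<le> t0" "t0 \<le> t" "\<And>j. m \<le> x t0 j"
  shows "m \<le> x t i"
  using sys.upper[OF neg assms(1,2), of "-m" i] assms(3) by simp

definition Mx where "Mx t = Max (range (x t))"
definition mx where "mx t = Min (range (x t))"

lemma Mx_ge: "x t i \<le> Mx t" unfolding Mx_def by (rule Max_ge) auto
lemma mx_le: "mx t \<le> x t i" unfolding mx_def by (rule Min_le) auto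
lemma Mx_in: "\<exists>i. x t i = Mx t"
proof -
  have "Max (range (x t)) \<in> range (x t)" by (rule Max_in) auto
  then show ?thesis unfolding Mx_def by (metis imageE)
qed
lemma mx_in: "\<exists>i. x t i = mx t"
proof -
  have "Min (range (x t)) \<in> range (x t)" by (rule Min_in) auto
  then show ?thesis unfolding mx_def by (metis imageE)
qed

lemma mono_d:
  assumes "0 \<le> t0" "t0 \<le> t"
  shows "Mx t - mx t \<le> Mx t0 - mx t0"
proof -
  obtain i where i: "x t i = Mx t" using Mx_in by blast
  obtain j where j: "x t j = mx t" using mx_in by blast
  have "x t i \<le> Mx t0" using upper[OF assms Mx_ge] .
  moreover have "mx t0 \<le> x t j" using lower[OF assms mx_le] .
  ultimately show ?thesis using i j by simp
qed

lemma contract: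
  fixes N :: nat and t0 :: real
  assumes sc: "\<And>i k. \<exists>l\<le>N. (i,k) \<in> (graph_edges a)^^l" and t0: "0 \<le> t0"
  shows "Mx (t0 + N) - mx (t0 + N) \<le>
     (1 - exp (- Kc a * N) * (exp (- Kc a * N) * amin a / 2)^N) * (Mx t0 - mx t0)"
proof -
  define \<rho> where "\<rho> = exp (- Kc a * N) * amin a / 2"
  define \<gamma> where "\<gamma> = exp (- Kc a * N) * \<rho>^N"
  have \<rho>0: "0 < \<rho>" unfolding \<rho>_def using amin_pos[of a] by simp
  have e1: "exp (- Kc a * N) \<le> 1" using Kc_nonneg by simp
  have "exp (- Kc a * N) * amin a \<le> 1" by (rule mult_le_one[OF e1 _ amin_le1]) (use amin_pos[of a] in simp)
  then have \<rho>1: "\<rho> \<le> 1" unfolding \<rho>_def by simp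
  obtain r where r: "x t0 r = mx t0" using mx_in by blast
  have bnd: "x (t0 + N) k \<le> Mx t0 - \<gamma> * (Mx t0 - mx t0)" for k
  proof -
    obtain l where l: "l \<le> N" "(r,k) \<in> (graph_edges a)^^l" using sc by blast
    have "exp (- Kc a * N) * \<rho>^l * (Mx t0 - mx t0) \<le> Mx t0 - x (t0 + N) k"
      unfolding \<rho>_def by (rule propagate[OF t0 Mx_ge r l(2)]) (use l in auto)
    moreover have "\<rho>^N \<le> \<rho>^l" using l \<rho>0 \<rho>1 by (simp add: power_decreasing)
    moreover have "0 \<le> Mx t0 - mx t0" using Mx_ge[of t0 r] r by simp
    moreover have "exp (- Kc a * N) * \<rho>^N * (Mx t0 - mx t0) \<le> exp (- Kc a * N) * \<rho>^l * (Mx t0 - mx t0)"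
      using calculation by (intro mult_right_mono mult_left_mono) auto
    ultimately have "\<gamma> * (Mx t0 - mx t0) \<le> Mx t0 - x (t0 + N) k"
      unfolding \<gamma>_def by linarith
    then show ?thesis by simp
  qed
  obtain i where i: "x (t0 + N) i = Mx (t0 + N)" using Mx_in by blast
  have "mx t0 \<le> mx (t0 + N)"
  proof -
    obtain j where j: "x (t0 + N) j = mx (t0 + N)" using mx_in by blast
    show ?thesis using lower[OF t0 _ mx_le, of "t0 + N" j] j by simp
  qed
  then show ?thesis using bnd[of i] i unfolding \<gamma>_def \<rho>_def by (simp add: algebra_simps)
qed

lemma consensus_sys:
  fixes N :: nat
  assumes sc: "\<And>i k. \<exists>l\<le>N. (i,k) \<in> (graph_edges a)^^l"
  shows "consensus x"
proof -
  define \<gamma> where "\<gamma> = exp (- Kc a * N) * (exp (- Kc a * N) * amin a / 2)^N"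
  have \<gamma>0: "0 < \<gamma>" unfolding \<gamma>_def using amin_pos[of a] by simp
  have e1: "exp (- Kc a * N) \<le> 1" using Kc_nonneg by simp
  have "exp (- Kc a * N) * amin a \<le> 1" by (rule mult_le_one[OF e1 _ amin_le1]) (use amin_pos[of a] in simp)
  then have "exp (- Kc a * N) * amin a / 2 \<le> 1" by simp
  then have pw: "(exp (- Kc a * N) * amin a / 2)^N \<le> 1" by (rule power_le_one[rotated]) (use amin_pos[of a] in simp)
  have \<gamma>1: "\<gamma> \<le> 1" unfolding \<gamma>_def using mult_le_one[OF e1 _ pw] amin_pos[of a] by simp
  define d0 where "d0 = Mx 0 - mx 0"
  have iter: "Mx (real n * N) - mx (real n * N) \<le> (1 - \<gamma>)^n * d0" for n
  proof (induction n)
    case 0 then show ?case unfolding d0_def by simp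
  next
    case (Suc n)
    have "Mx (real n * N + N) - mx (real n * N + N) \<le> (1 - \<gamma>) * (Mx (real n * N) - mx (real n * N))"
      unfolding \<gamma>_def by (rule contract[OF sc]) simp
    also have "\<dots> \<le> (1 - \<gamma>) * ((1 - \<gamma>)^n * d0)" using Suc.IH \<gamma>1 by (intro mult_left_mono) auto
    finally show ?case by (simp add: algebra_simps)
  qed
  have d00: "0 \<le> d0" unfolding d0_def using Mx_ge[of 0 undefined] mx_le[of 0 undefined] by simp
  show ?thesis unfolding consensus_def
  proof (intro allI)
    fix i j
    show "((\<lambda>t. x t i - x t j) \<longlongrightarrow> 0) at_top"
    proof (rule tendstoI)
      fix e :: real assume e: "0 < e"
      obtain n where n: "(1 - \<gamma>)^n * d0 < e"
      proof (cases "d0 = 0")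
        case True then show ?thesis using that[of 0] e by simp
      next
        case False
        then have "0 < e / d0" using d00 e by simp
        from real_arch_pow_inv[OF this, of "1 - \<gamma>"] \<gamma>0 obtain n where "(1 - \<gamma>)^n < e / d0" by auto
        then show ?thesis using that[of n] False d00 by (simp add: field_simps)
      qed
      show "\<forall>\<^sub>F t in at_top. dist (x t i - x t j) 0 < e"
        unfolding eventually_at_top_linorder
      proof (intro exI[of _ "real n * N"] allI impI)
        fix t assume t: "real n * N \<le> t"
        have "\<bar>x t i - x t j\<bar> \<le> Mx t - mx t"
          using Mx_ge[of t i] mx_le[of t i] Mx_ge[of t j] mx_le[of t j] by linarith
        also have "\<dots> \<le> Mx (real n * N) - mx (real n * N)" by (rule mono_d[OF _ t]) simp
        also have "\<dots> \<le> (1 - \<gamma>)^n * d0" by (rule iter)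
        finally show "dist (x t i - x t j) 0 < e" using n by (simp add: dist_real_def)
      qed
    qed
  qed
qed

end

theorem corollary2:
  fixes a :: "'n::finite \<Rightarrow> 'n \<Rightarrow> real"
  assumes "weighted_adjacency a" and "strongly_connected a"
  shows "\<exists>c. 0 < c \<and> c < 1 \<and>
    (\<forall>(x :: real \<Rightarrow> 'n \<Rightarrow> real) (T :: 'n \<Rightarrow> real set).
       (\<forall>i. admissible_triggers (T i)) \<and> solves_S a T x \<and>
       (\<forall>i. generated_by (T i) (rule1 c (qfun a x i))
          \<or> generated_by (T i) (rule2 c (qfun a x i)))
       \<longrightarrow> consensus x)"
proof -
  have "\<exists>N::nat. \<forall>i k. \<exists>l\<le>N. (i,k) \<in> (graph_edges a)^^l"
  proof -
    have ex: "\<exists>l. (i,k) \<in> (graph_edges a)^^l" for i k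
    proof (cases "i = k")
      case True then show ?thesis by (intro exI[of _ 0]) simp
    next
      case False then show ?thesis using assms(2) unfolding strongly_connected_def trancl_power by blast
    qed
    define f where "f p = (SOME l. (fst p, snd p) \<in> (graph_edges a)^^l)" for p :: "'n \<times> 'n"
    have f: "(i,k) \<in> (graph_edges a)^^(f (i,k))" for i k unfolding f_def using someI_ex[OF ex[of i k]] by simp
    define N where "N = Max (range f)"
    have "f (i,k) \<le> N" for i k unfolding N_def by (rule Max_ge) auto
    then show ?thesis using f by blast
  qed
  then obtain N :: nat where N: "\<And>i k. \<exists>l\<le>N. (i,k) \<in> (graph_edges a)^^l" by blast
  show ?thesis
  proof (intro exI[of _ "1/2::real"] conjI allI impI)
    fix x :: "real \<Rightarrow> 'n \<Rightarrow> real" and T :: "'n \<Rightarrow> real set"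
    assume H: "(\<forall>i. admissible_triggers (T i)) \<and> solves_S a T x \<and>
       (\<forall>i. generated_by (T i) (rule1 (1/2) (qfun a x i)) \<or> generated_by (T i) (rule2 (1/2) (qfun a x i)))"
    have adm: "\<And>i. admissible_triggers (T i)" using H by blast
    have sol: "solves_S a T x" using H by blast
    have gen: "\<And>i. generated_by (T i) (rule1 (1/2) (qfun a x i)) \<or> generated_by (T i) (rule2 (1/2) (qfun a x i))"
      using H by blast
    have cont: "\<And>i. continuous_on {0..} (\<lambda>t. x t i)" using sol unfolding solves_S_def by blast
    have cq: "continuous_on {0..} (\<lambda>t. qfun a x i t)" for i
      unfolding qfun_def by (intro continuous_intros cont)
    interpret sys a x T
    proof unfold_locales
      show "weighted_adjacency a" by fact
      show "continuous_on {0..} (\<lambda>t. x t i)" for i by (rule cont)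
      show "finite (T i \<inter> {..b})" for i b using adm[of i] unfolding admissible_triggers_def by blast
      fix i t assume t: "0 < t" "t \<notin> T i"
      define s where "s = last_trigger (T i) t"
      have d: "((\<lambda>s. x s i) has_real_derivative qfun a x i s) (at t)"
        using sol t unfolding solves_S_def s_def qfun_def by blast
      have bnd: "qfun a x i s \<le> phi (qfun a x i t) \<and> - qfun a x i s \<le> phi (- qfun a x i t)"
        using gen[of i]
      proof
        assume g: "generated_by (T i) (rule1 (1/2) (qfun a x i))"
        from trig[OF adm g, of t] t have "rule1 (1/2) (qfun a x i) s t" unfolding s_def by auto
        then show ?thesis by (rule rule1_bound)
      next
        assume g: "generated_by (T i) (rule2 (1/2) (qfun a x i))"
        from trig[OF adm g, of t] t have st: "s \<in> T i" "s \<le> t" "\<forall>u\<in>{s..t}. rule2 (1/2) (qfun a x i) s u"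
          unfolding s_def by auto
        have "s \<ge> 0" using st(1) adm[of i] unfolding admissible_triggers_def by auto
        then have "continuous_on {s..t} (qfun a x i)"
          by (intro continuous_on_subset[OF cq]) auto
        then show ?thesis by (rule rule2_bound[OF st(2) _ st(3)])
      qed
      show "\<exists>D. ((\<lambda>s. x s i) has_real_derivative D) (at t) \<and> D \<le> phi (qfun a x i t) \<and> - D \<le> phi (- qfun a x i t)"
        using d bnd by blast
    qed
    show "consensus x" by (rule consensus_sys[OF N])
  qed simp_all
qed

end
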